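(* Let $w$ be an nTL-monomial for $P_n$ with decreasing runs $R_1,\dots,R_k$ (in order of appearance) and peaks $p_1,\dots,p_k$. Then $p_1<p_2<\cdots<p_k$.
   Context: Fix $n\ge 0$. The nil-Temperley-Lieb algebra $A_n$ of the path graph $P_n$ is the unital associative algebra generated by $x_1,\dots,x_n$ subject to the relations $x_i^2=0$; $x_ix_j=x_jx_i$ if $|i-j|>1$; $x_ix_{i+1}x_i=0$ and $x_{i+1}x_ix_{i+1}=0$ for $1\le i<n$. A word is a finite product $x_{i_1}\cdots x_{i_m}$ of generators. Two words are equivalent if one can be obtained from the other by repeatedly swapping adjacent letters $x_ix_j\to x_jx_i$ with $|i-j|>1$. A word is reducible if it equals $0$ in $A_n$. Words of the same length are compared lexicographically by index sequences. An nTL-monomial is a word that is not reducible and lexicographically smallest among all words equivalent to it. A decreasing run is a maximal block of consecutive letters with strictly decreasing indices; the index of its first letter is its peak, and the index of its last letter is its valley. *)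

theory Defs
  imports Main
begin

text \<open>Words in the generators x_1,...,x_n are represented by their index sequences
  (lists of natural numbers in {1..n}).\<close>

definition is_word :: "nat \<Rightarrow> nat list \<Rightarrow> bool" where
  "is_word n w \<longleftrightarrow> (\<forall>i \<in> set w. 1 \<le> i \<and> i \<le> n)"

definition comm_step :: "nat list \<Rightarrow> nat list \<Rightarrow> bool" where
  "comm_step u v \<longleftrightarrow> (\<exists>a b i j. u = a @ [i, j] @ b \<and> v = a @ [j, i] @ b
      \<and> (i + 1 < j \<or> j + 1 < i))"

definition word_equiv :: "nat list \<Rightarrow> nat list \<Rightarrow> bool" where
  "word_equiv u v \<longleftrightarrow> comm_step\<^sup>*\<^sup>* u v"

definition has_relator :: "nat \<Rightarrow> nat list \<Rightarrow> bool" where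
  "has_relator n w \<longleftrightarrow> (\<exists>a b i. (w = a @ [i, i] @ b)
      \<or> (1 \<le> i \<and> i < n \<and> (w = a @ [i, i + 1, i] @ b \<or> w = a @ [i + 1, i, i + 1] @ b)))"

text \<open>Reducible: the word equals 0 in A_n. Since all relations of A_n are either
  monomial (= 0) or commutations, A_n is the contracted monoid algebra of the
  monoid with zero given by the same presentation; a word is 0 there iff some
  word equivalent to it contains a relator as a factor.\<close>
definition reducible :: "nat \<Rightarrow> nat list \<Rightarrow> bool" where
  "reducible n w \<longleftrightarrow> (\<exists>v. word_equiv w v \<and> has_relator n v)"

definition lex_le :: "nat list \<Rightarrow> nat list \<Rightarrow> bool" where
  "lex_le u v \<longleftrightarrow> u = v \<or> (u, v) \<in> lexord {(a, b). a < b}"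

definition nTL_monomial :: "nat \<Rightarrow> nat list \<Rightarrow> bool" where
  "nTL_monomial n w \<longleftrightarrow> is_word n w \<and> \<not> reducible n w
      \<and> (\<forall>v. word_equiv w v \<longrightarrow> lex_le w v)"

fun runs :: "nat list \<Rightarrow> nat list list" where
  "runs [] = []"
| "runs [x] = [[x]]"
| "runs (x # y # xs) =
     (case runs (y # xs) of
        [] \<Rightarrow> [[x]]
      | r # rs \<Rightarrow> (if y < x then (x # r) # rs else [x] # r # rs))"

definition peaks :: "nat list \<Rightarrow> nat list" where
  "peaks w = map hd (runs w)"

definition valleys :: "nat list \<Rightarrow> nat list" where
  "valleys w = map last (runs w)"

end

theory Submission
  imports Defs
begin

lemma comm_ctx: "comm_step u v \<Longrightarrow> comm_step (p @ u @ s) (p @ v @ s)"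
  unfolding comm_step_def by (metis append.assoc)

lemma equiv_move:
  assumes "\<forall>c\<in>set r. c + 1 < b"
  shows "word_equiv (p @ r @ [b] @ s) (p @ b # r @ s)"
  using assms
proof (induction r arbitrary: p)
  case Nil
  then show ?case by (simp add: word_equiv_def)
next
  case (Cons c r)
  have 1: "word_equiv ((p @ [c]) @ r @ [b] @ s) ((p @ [c]) @ b # r @ s)"
    using Cons.IH[of "p @ [c]"] Cons.prems by simp
  have "comm_step (p @ [c, b] @ (r @ s)) (p @ [b, c] @ (r @ s))"
    unfolding comm_step_def using Cons.prems by fastforce
  then show ?case using 1 unfolding word_equiv_def
    by (simp add: rtranclp.rtrancl_into_rtrancl)
qed

lemma no_double:
  assumes "nTL_monomial n (p @ [i, i] @ s)" shows False
  using assms unfolding nTL_monomial_def reducible_def has_relator_def word_equiv_def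
  by blast

lemma step_one:
  assumes "nTL_monomial n (p @ [i, j] @ s)" "j < i" shows "i = j + 1"
proof (rule ccontr)
  assume "i \<noteq> j + 1"
  then have "comm_step (p @ [i, j] @ s) (p @ [j, i] @ s)"
    unfolding comm_step_def using assms(2) by fastforce
  then have "word_equiv (p @ [i, j] @ s) (p @ [j, i] @ s)"
    unfolding word_equiv_def by simp
  then have "lex_le (p @ [i, j] @ s) (p @ [j, i] @ s)"
    using assms(1) unfolding nTL_monomial_def by blast
  then show False using assms(2) unfolding lex_le_def
    by (simp add: lexord_same_pref_iff)
qed

lemma key:
  assumes "nTL_monomial n (pre @ r @ b # suf)" "r \<noteq> []" "sorted_wrt (>) r" "last r \<le> b"
  shows "hd r < b"
  using assms
proof (induction r arbitrary: pre)
  case Nil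
  then show ?case by simp
next
  case (Cons x r)
  show ?case
  proof (cases "r = []")
    case True
    then have "x \<le> b" using Cons.prems by simp
    moreover have "x \<noteq> b"
      using Cons.prems(1) no_double[of n pre x suf] True by auto
    ultimately show ?thesis by simp
  next
    case False
    then obtain y r' where Cons2: "r = y # r'" by (cases r) auto
    have "nTL_monomial n ((pre @ [x]) @ r @ b # suf)" using Cons.prems by simp
    moreover have "sorted_wrt (>) r" using Cons.prems by simp
    moreover have "last r \<le> b" using Cons.prems Cons2 by simp
    ultimately have yb: "y < b" using Cons.IH Cons2 by fastforce
    have yx: "y < x" using Cons.prems Cons2 by simp
    have x: "x = y + 1"
      using step_one[of n pre x y "r' @ b # suf"] Cons.prems(1) Cons2 yx by simp
    show ?thesis
    proof (rule ccontr)
      assume "\<not> hd (x # r) < b"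
      then have bx: "b = y + 1" using x yb by simp
      have r'y: "\<forall>c\<in>set r'. c < y" using Cons.prems Cons2 by simp
      then have "\<forall>c\<in>set r'. c + 1 < b" using bx by auto
      then have eq: "word_equiv ((pre @ [y + 1, y]) @ r' @ [b] @ suf) ((pre @ [y + 1, y]) @ b # r' @ suf)"
        by (rule equiv_move)
      have w: "pre @ (x # r) @ b # suf = (pre @ [y + 1, y]) @ r' @ [b] @ suf"
        using x Cons2 by simp
      have iw: "is_word n (pre @ (x # r) @ b # suf)" using Cons.prems unfolding nTL_monomial_def by simp
      then have "1 \<le> y" "y < n" using Cons2 x unfolding is_word_def by auto
      then have "has_relator n ((pre @ [y + 1, y]) @ b # r' @ suf)"
        unfolding has_relator_def using bx
        by (metis append.assoc append_Cons append_Nil)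
      then have "reducible n (pre @ (x # r) @ b # suf)"
        unfolding reducible_def using eq w by metis
      then show False using Cons.prems unfolding nTL_monomial_def by simp
    qed
  qed
qed

lemma runs_nonempty: "w \<noteq> [] \<Longrightarrow> runs w \<noteq> []"
  by (induction w rule: runs.induct) (auto split: list.splits)

lemma runs_append:
  assumes "r \<noteq> []" "sorted_wrt (>) r" "rest = [] \<or> last r \<le> hd rest"
  shows "runs (r @ rest) = r # runs rest"
  using assms
proof (induction r)
  case Nil
  then show ?case by simp
next
  case (Cons x r)
  show ?case
  proof (cases "r = []")
    case True
    then show ?thesis
    proof (cases rest)
      case Nil
      then show ?thesis using \<open>r = []\<close> by simp
    next
      case (Cons y xs)
      then have "runs rest \<noteq> []" using runs_nonempty by simp
      then obtain q qs where "runs (y # xs) = q # qs" using Cons by (cases "runs (y # xs)") auto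
      then show ?thesis using Cons \<open>r = []\<close> Cons.prems by auto
    qed
  next
    case False
    then obtain y r' where Cons2: "r = y # r'" by (cases r) auto
    have "runs (r @ rest) = r # runs rest" using Cons Cons2 by auto
    then show ?thesis using Cons.prems Cons2 by simp
  qed
qed

lemma decomp:
  "(w::nat list) \<noteq> [] \<Longrightarrow> \<exists>r rest. w = r @ rest \<and> r \<noteq> [] \<and> sorted_wrt (>) r \<and> (rest = [] \<or> last r \<le> hd rest)"
proof (induction w)
  case Nil
  then show ?case by simp
next
  case (Cons x w)
  show ?case
  proof (cases "w = []")
    case True
    then show ?thesis by (intro exI[of _ "[x]"] exI[of _ "[]"]) simp
  next
    case False
    then obtain r rest where h: "w = r @ rest" "r \<noteq> []" "sorted_wrt (>) r" "rest = [] \<or> last r \<le> hd rest"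
      using Cons by blast
    show ?thesis
    proof (cases "hd w < x")
      case True
      have "\<forall>c\<in>set r. c < x"
      proof
        fix c assume "c \<in> set r"
        then have "c \<le> hd r" using h(2,3) by (cases r) (auto intro: less_imp_le)
        then show "c < x" using True h by auto
      qed
      then show ?thesis using h
        by (intro exI[of _ "x # r"] exI[of _ rest]) auto
    next
      case False
      then show ?thesis using \<open>w \<noteq> []\<close>
        by (intro exI[of _ "[x]"] exI[of _ w]) auto
    qed
  qed
qed

lemma hd_peaks: "rest \<noteq> [] \<Longrightarrow> peaks rest = hd rest # tl (peaks rest)"
proof -
  assume "rest \<noteq> []"
  then obtain r2 rest2 where h: "rest = r2 @ rest2" "r2 \<noteq> []" "sorted_wrt (>) r2" "rest2 = [] \<or> last r2 \<le> hd rest2"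
    using decomp by blast
  then show ?thesis using runs_append[OF h(2,3,4)] unfolding peaks_def by simp
qed

lemma main:
  "nTL_monomial n (pre @ w) \<Longrightarrow> sorted_wrt (<) (peaks w)"
proof (induction "length w" arbitrary: w pre rule: less_induct)
  case less
  show ?case
  proof (cases "w = []")
    case True
    then show ?thesis by (simp add: peaks_def)
  next
    case False
    then obtain r rest where h: "w = r @ rest" "r \<noteq> []" "sorted_wrt (>) r" "rest = [] \<or> last r \<le> hd rest"
      using decomp by blast
    have pk: "peaks w = hd r # peaks rest"
      using runs_append[OF h(2,3,4)] h(1) unfolding peaks_def by simp
    have IH: "sorted_wrt (<) (peaks rest)"
      using less.hyps[of rest "pre @ r"] less.prems h by simp
    have "\<forall>p\<in>set (peaks rest). hd r < p"
    proof (cases rest)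
      case Nil
      then show ?thesis by (simp add: peaks_def)
    next
      case (Cons b suf)
      have "hd r < b" using key[of n pre r b suf] less.prems h Cons by simp
      moreover have "peaks rest = b # tl (peaks rest)" using hd_peaks Cons by fastforce
      ultimately show ?thesis using IH
        by (metis dual_order.strict_trans set_ConsD sorted_wrt.simps(2))
    qed
    then show ?thesis using pk IH by simp
  qed
qed

theorem lemma3:
  fixes n :: nat and w :: "nat list"
  assumes "nTL_monomial n w"
  shows "sorted_wrt (<) (peaks w)"
  using main[of n "[]" w] assms by simp

end
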